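(* For each $q\in\{25,49,121\}$ there exists an $(\mathbb{F}_4\times\mathbb{F}_q,\ \mathbb{F}_4\times\{0\},\ 4,1)$-BRDF and a nested $(4q,4,1)$-BIBD.
   Context: Here $\mathbb{F}_4\times\mathbb{F}_q$ is regarded as an additive group (the direct product of the additive groups of the finite fields). For a finite additive group $G$ with subgroup $H$, a $(G,H,k,\lambda)$-RDF is a collection of $k$-subsets of $G$ (base blocks) whose differences $x-y$ ($x\ne y$ in a common base block) cover every element of $G\setminus H$ exactly $\lambda$ times and no element of $H$; it is a BRDF if moreover all base blocks are disjoint from $H$ and the base blocks and their negatives are pairwise disjoint. A $(v,k,\lambda)$-BIBD is a set $X$ of $v$ points with a multiset $\mathcal{A}$ of $k$-subsets such that every pair of distinct points lies in exactly $\lambda$ blocks (partial: at most $\lambda$). A $(v,4,1)$-BIBD is nested if there is $\phi:\mathcal{A}\to X$ such that $\{A\cup\{\phi(A)\}\}$ is the block multiset of a partial $(v,5,2)$-BIBD on $X$ (in particular $\phi(A)\notin A$). *)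

theory Defs
  imports Main "HOL-Library.Multiset" "HOL-Library.Product_Plus"
begin

definition diff_count :: "'g::ab_group_add set list \<Rightarrow> 'g \<Rightarrow> nat" where
  "diff_count Bs g = (\<Sum>B\<leftarrow>Bs. card {(x, y). x \<in> B \<and> y \<in> B \<and> x \<noteq> y \<and> x - y = g})"

definition is_RDF :: "'g::ab_group_add set \<Rightarrow> 'g set \<Rightarrow> nat \<Rightarrow> nat \<Rightarrow> 'g set list \<Rightarrow> bool" where
  "is_RDF G H k lam Bs \<longleftrightarrow>
     (\<forall>B\<in>set Bs. B \<subseteq> G \<and> finite B \<and> card B = k) \<and>
     (\<forall>g\<in>G - H. diff_count Bs g = lam) \<and>
     (\<forall>g\<in>H. diff_count Bs g = 0)"

definition is_BRDF :: "'g::ab_group_add set \<Rightarrow> 'g set \<Rightarrow> nat \<Rightarrow> nat \<Rightarrow> 'g set list \<Rightarrow> bool" where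
  "is_BRDF G H k lam Bs \<longleftrightarrow>
     is_RDF G H k lam Bs \<and>
     (\<forall>B\<in>set Bs. B \<inter> H = {}) \<and>
     (let L = Bs @ map (\<lambda>B. uminus ` B) Bs in
       \<forall>i<length L. \<forall>j<length L. i \<noteq> j \<longrightarrow> L ! i \<inter> L ! j = {})"

definition is_BIBD :: "'p set \<Rightarrow> nat \<Rightarrow> nat \<Rightarrow> nat \<Rightarrow> 'p set multiset \<Rightarrow> bool" where
  "is_BIBD X v k lam As \<longleftrightarrow> finite X \<and> card X = v \<and>
     (\<forall>A\<in>#As. A \<subseteq> X \<and> card A = k) \<and>
     (\<forall>x\<in>X. \<forall>y\<in>X. x \<noteq> y \<longrightarrow> size (filter_mset (\<lambda>A. x \<in> A \<and> y \<in> A) As) = lam)"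

definition is_partial_BIBD :: "'p set \<Rightarrow> nat \<Rightarrow> nat \<Rightarrow> nat \<Rightarrow> 'p set multiset \<Rightarrow> bool" where
  "is_partial_BIBD X v k lam As \<longleftrightarrow> finite X \<and> card X = v \<and>
     (\<forall>A\<in>#As. A \<subseteq> X \<and> card A = k) \<and>
     (\<forall>x\<in>X. \<forall>y\<in>X. x \<noteq> y \<longrightarrow> size (filter_mset (\<lambda>A. x \<in> A \<and> y \<in> A) As) \<le> lam)"

text \<open>Nested (v,4,1)-BIBD: the map phi is given as a multiset N of pairs (block, phi(block)),
  one pair per block occurrence (so repeated blocks may get different points).\<close>
definition is_nested_BIBD :: "'p set \<Rightarrow> nat \<Rightarrow> 'p set multiset \<Rightarrow> bool" where
  "is_nested_BIBD X v As \<longleftrightarrow> is_BIBD X v 4 1 As \<and>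
     (\<exists>N :: ('p set \<times> 'p) multiset.
        image_mset fst N = As \<and> (\<forall>(A, x)\<in>#N. x \<in> X \<and> x \<notin> A) \<and>
        is_partial_BIBD X v 5 2 (image_mset (\<lambda>(A, x). insert x A) N))"

end

theory Submission
  imports Defs "HOL-Number_Theory.Number_Theory"
begin


lemma CHAR_field_eq:
  assumes "card (UNIV :: 'f::{field,finite} set) = r * r" "prime r"
  shows "CHAR('f) = r"
proof -
  have pos: "CHAR('f) > 0" by (simp add: finite_imp_CHAR_pos)
  have pr: "prime CHAR('f)" using prime_CHAR_semidom[OF pos] .
  have "CHAR('f) dvd r * r" using CHAR_dvd_CARD[where ?'a='f] assms(1) by simp
  then have "CHAR('f) dvd r" using pr prime_dvd_mult_iff by blast
  then show ?thesis using primes_dvd_imp_eq pr assms(2) by blast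
qed

lemma range_of_int_sub:
  assumes "CHAR('f::ring_1) = r" "r > 0"
  shows "range (of_int :: int \<Rightarrow> 'f) \<subseteq> (\<lambda>n. of_nat n) ` {..<r}"
proof
  fix x assume "x \<in> range (of_int :: int \<Rightarrow> 'f)"
  then obtain z where z: "x = of_int z" by auto
  have "(of_int z :: 'f) = of_int (z mod int r)"
    by (simp add: of_int_eq_iff_cong_CHAR assms(1))
  also have "\<dots> = of_nat (nat (z mod int r))" using assms(2) by simp
  finally show "x \<in> (\<lambda>n. of_nat n) ` {..<r}" using z assms(2)
    by (intro image_eqI[of _ _ "nat (z mod int r)"]) (auto simp: nat_less_iff)
qed

lemma exists_nonint:
  assumes "CHAR('f::ring_1) = r" "r > 0" "r < card (UNIV :: 'f set)"
  shows "\<exists>t::'f. t \<notin> range (of_int :: int \<Rightarrow> 'f)"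
proof (rule ccontr)
  assume "\<not> ?thesis"
  then have "UNIV \<subseteq> (\<lambda>n. of_nat n :: 'f) ` {..<r}" using range_of_int_sub[OF assms(1,2)] by auto
  then have "card (UNIV :: 'f set) \<le> card ((\<lambda>n. of_nat n :: 'f) ` {..<r})"
    by (intro card_mono) auto
  also have "\<dots> \<le> r" using card_image_le[of "{..<r}"] by simp
  finally show False using assms(3) by simp
qed

lemma indep:
  fixes t :: "'f::field"
  assumes "CHAR('f) = r" "prime r" "t \<notin> range (of_int :: int \<Rightarrow> 'f)"
    "a < r" "b < r" "a' < r" "b' < r"
    "of_nat a + of_nat b * t = of_nat a' + of_nat b' * t"
  shows "a = a' \<and> b = b'"
proof -
  have bb: "b = b'"
  proof (rule ccontr)
    assume nb: "b \<noteq> b'"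
    define k where "k = int b - int b'"
    have "\<not> int r dvd k"
    proof
      assume "int r dvd k"
      moreover have "k \<noteq> 0" "\<bar>k\<bar> < int r" using nb assms(5,7) by (auto simp: k_def)
      moreover have "\<bar>int r\<bar> \<le> \<bar>k\<bar>" if "int r dvd k" using dvd_imp_le_int \<open>k \<noteq> 0\<close> that by blast
      ultimately show False by linarith
    qed
    moreover have "prime (int r)" using assms(2) by simp
    ultimately have "coprime (int r) k" using prime_imp_coprime by blast
    then obtain k' where k': "[k * k' = 1] (mod int r)"
      using cong_solve_coprime_int[of k "int r"] by (auto simp: coprime_commute)
    have kk: "(of_int k :: 'f) * of_int k' = 1"
    proof -
      have "(of_int (k * k') :: 'f) = of_int 1" using k' by (simp only: of_int_eq_iff_cong_CHAR assms(1))
      then show ?thesis by simp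
    qed
    have kt: "(of_int k :: 'f) * t = of_int (int a' - int a)"
      using assms(8) by (simp add: k_def algebra_simps)
    have "t = (of_int k' * of_int k) * t" using kk by (simp add: mult.commute)
    also have "\<dots> = of_int (k' * (int a' - int a))" using kt by (simp add: mult.assoc)
    finally show False using assms(3) by (metis rangeI)
  qed
  then have "(of_nat a :: 'f) = of_nat a'" using assms(8) by simp
  then have "[a = a'] (mod r)" by (simp add: of_nat_eq_iff_cong_CHAR assms(1))
  then show ?thesis using bb cong_less_modulus_unique_nat assms(4,6) by blast
qed


definition subc :: "nat \<Rightarrow> nat \<Rightarrow> nat \<Rightarrow> nat" where
 "subc p n m = (n mod 2 + m mod 2) mod 2 + 2 * ((n div 2 mod 2 + m div 2 mod 2) mod 2)
   + 4 * ((n div 4 mod p + p - m div 4 mod p) mod p + p * ((n div 4 div p + p - m div 4 div p) mod p))"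
definition negc :: "nat \<Rightarrow> nat \<Rightarrow> nat" where "negc p n = subc p 0 n"

definition Enc :: "'a::field \<Rightarrow> 'b::field \<Rightarrow> nat \<Rightarrow> nat \<Rightarrow> 'a \<times> 'b" where
 "Enc w t p n = (of_nat (n mod 2) + of_nat (n div 2 mod 2) * w,
                 of_nat (n div 4 mod p) + of_nat (n div 4 div p) * t)"

lemma code_parts:
  fixes A B C D p :: nat
  assumes "A < 2" "B < 2" "C < p" "D < p"
  shows "(A + 2*B + 4*(C + p*D)) mod 2 = A" "(A + 2*B + 4*(C + p*D)) div 2 mod 2 = B"
        "(A + 2*B + 4*(C + p*D)) div 4 mod p = C" "(A + 2*B + 4*(C + p*D)) div 4 div p = D"
proof -
  have "\<And>X. (A + 2*B + 4*X) div 2 = B + 2*X" using assms(1) by presburger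
  then have d2: "(A + 2*B + 4*(C + p*D)) div 2 = B + 2*(C + p*D)" .
  have "\<And>X. (A + 2*B + 4*X) div 4 = X" using assms(1,2) by presburger
  then have d4: "(A + 2*B + 4*(C + p*D)) div 4 = C + p*D" .
  show "(A + 2*B + 4*(C + p*D)) mod 2 = A" using assms(1) by presburger
  show "(A + 2*B + 4*(C + p*D)) div 2 mod 2 = B" unfolding d2 using assms(2) by presburger
  show "(A + 2*B + 4*(C + p*D)) div 4 mod p = C" unfolding d4 using assms(3) by simp
  show "(A + 2*B + 4*(C + p*D)) div 4 div p = D" unfolding d4 using assms(3) by simp
qed

lemma code_decomp:
  fixes n p :: nat
  shows "n = n mod 2 + 2 * (n div 2 mod 2) + 4 * (n div 4 mod p + p * (n div 4 div p))"
proof -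
  have "n div 4 = n div 4 mod p + p * (n div 4 div p)" by simp
  moreover have "n = n mod 2 + 2 * (n div 2 mod 2) + 4 * (n div 4)" by presburger
  ultimately show ?thesis by simp
qed

locale enc =
  fixes w :: "'a::{field,finite}" and t :: "'b::{field,finite}" and p :: nat
  assumes ch2: "CHAR('a) = 2" and chp: "CHAR('b) = p" and pp: "prime p"
    and w: "w \<notin> range (of_int :: int \<Rightarrow> 'a)" and t: "t \<notin> range (of_int :: int \<Rightarrow> 'b)"
    and ca: "card (UNIV :: 'a set) = 4" and cb: "card (UNIV :: 'b set) = p * p"
begin

abbreviation "E \<equiv> Enc w t p"
abbreviation "N \<equiv> 4 * p * p"

lemma p_pos: "p > 0" using pp prime_gt_0_nat by blast

lemma div_lt: "n < N \<Longrightarrow> n div 4 div p < p"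
  using p_pos by (simp add: div_less_iff_less_mult mult.commute mult.left_commute)

lemma snd_inj:
  assumes "n div 4 < p * p" "m div 4 < p * p" "snd (E n) = snd (E m)"
  shows "n div 4 = m div 4"
proof -
  have "n div 4 div p < p" "m div 4 div p < p" using assms(1,2) p_pos
    by (simp_all add: div_less_iff_less_mult mult.commute)
  then have "n div 4 mod p = m div 4 mod p \<and> n div 4 div p = m div 4 div p"
    using indep[OF chp pp t, of "n div 4 mod p" "n div 4 div p" "m div 4 mod p" "m div 4 div p"]
      assms(3) p_pos by (simp add: Enc_def)
  then show ?thesis by (metis div_mult_mod_eq)
qed

lemma fst_inj:
  assumes "fst (E n) = fst (E m)"
  shows "n mod 2 = m mod 2 \<and> n div 2 mod 2 = m div 2 mod 2"
  using indep[OF ch2 _ w, of "n mod 2" "n div 2 mod 2" "m mod 2" "m div 2 mod 2"] assms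
  by (simp add: Enc_def)

lemma E_inj: assumes "n < N" "m < N" "E n = E m" shows "n = m"
proof -
  have a: "n div 4 < p * p" "m div 4 < p * p" using assms(1,2) by (simp_all add: div_less_iff_less_mult mult.commute mult.left_commute)
  have h1: "n div 4 = m div 4" using snd_inj[OF a] assms(3) by simp
  have h2: "n mod 2 = m mod 2 \<and> n div 2 mod 2 = m div 2 mod 2" by (rule fst_inj) (simp add: assms(3))
  have dn: "n = n mod 2 + 2 * (n div 2 mod 2) + 4 * (n div 4)" by presburger
  have dm: "m = m mod 2 + 2 * (m div 2 mod 2) + 4 * (m div 4)" by presburger
  show ?thesis using dn dm h1 h2 by linarith
qed

lemma E_inj_on: "inj_on E {..<N}" unfolding inj_on_def using E_inj by blast

lemma E_surj: "E ` {..<N} = UNIV"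
proof -
  have "card (E ` {..<N}) = N" using card_image[OF E_inj_on] by simp
  also have "N = card (UNIV :: ('a \<times> 'b) set)" using ca cb
    by (simp add: UNIV_Times_UNIV[symmetric] card_cartesian_product del: UNIV_Times_UNIV)
  finally show ?thesis by (simp add: card_subset_eq)
qed


lemma of_nat_mod2: "(of_nat ((x + y) mod 2) :: 'a) = of_nat x - of_nat y"
proof -
  have "(of_nat ((x+y) mod 2)::'a) = of_nat (x+y)" unfolding of_nat_eq_iff_cong_CHAR ch2 cong_def by simp
  moreover have "(of_nat (2 * y) :: 'a) = 0" unfolding of_nat_eq_0_iff_char_dvd ch2 by simp
  then have "(of_nat y + of_nat y :: 'a) = 0" by (metis mult_2 of_nat_add)
  then have "- (of_nat y :: 'a) = of_nat y" by (simp only: neg_eq_iff_add_eq_0)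
  then have "(of_nat x - of_nat y :: 'a) = of_nat x + of_nat y" by (metis diff_conv_add_uminus)
  ultimately show ?thesis by simp
qed

lemma of_nat_modp: "y \<le> x + p \<Longrightarrow> (of_nat ((x + p - y) mod p) :: 'b) = of_nat x - of_nat y"
proof -
  assume "y \<le> x + p"
  have "(of_nat ((x + p - y) mod p)::'b) = of_nat (x + p - y)" unfolding of_nat_eq_iff_cong_CHAR chp cong_def by simp
  also have "\<dots> = of_nat x + of_nat p - of_nat y" using \<open>y \<le> x + p\<close> by (simp add: of_nat_diff)
  also have "(of_nat p :: 'b) = 0" by (simp add: of_nat_eq_0_iff_char_dvd chp)
  finally show ?thesis by simp
qed

lemma subc_parts:
  fixes n m :: nat
  defines "A \<equiv> (n mod 2 + m mod 2) mod 2" and "B \<equiv> (n div 2 mod 2 + m div 2 mod 2) mod 2"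
    and "C \<equiv> (n div 4 mod p + p - m div 4 mod p) mod p" and "D \<equiv> (n div 4 div p + p - m div 4 div p) mod p"
  shows "subc p n m = A + 2*B + 4*(C + p*D)" "A < 2" "B < 2" "C < p" "D < p"
proof -
  show "subc p n m = A + 2*B + 4*(C + p*D)" unfolding subc_def A_def B_def C_def D_def by (rule refl)
  show "A < 2" "B < 2" unfolding A_def B_def by simp_all
  show "C < p" "D < p" unfolding C_def D_def using p_pos by simp_all
qed

lemma subc_lt: "subc p n m < N"
proof -
  obtain A B C D where s: "subc p n m = A + 2*B + 4*(C + p*D)" "A < 2" "B < 2" "C < p" "D < p"
    using subc_parts by blast
  have "p * (D + 1) \<le> p * p" using s(5) by (intro mult_le_mono2) simp
  then have "p * D + p \<le> p * p" by simp
  then have "C + p * D + 1 \<le> p * p" using s(4) by linarith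
  then have "4 * (C + p * D + 1) \<le> 4 * (p * p)" by (rule mult_le_mono2)
  then have "4 * (C + p * D) + 4 \<le> 4 * (p * p)" by simp
  then show ?thesis using s(1-3) by (simp add: mult.assoc)
qed

lemma E_sub: assumes "n < N" "m < N" shows "E (subc p n m) = E n - E m"
proof -
  have sp: "subc p n m = (n mod 2 + m mod 2) mod 2 + 2*((n div 2 mod 2 + m div 2 mod 2) mod 2)
     + 4*((n div 4 mod p + p - m div 4 mod p) mod p + p*((n div 4 div p + p - m div 4 div p) mod p))"
    by (simp add: subc_def)
  have lt: "(n mod 2 + m mod 2) mod 2 < 2" "(n div 2 mod 2 + m div 2 mod 2) mod 2 < 2"
    "(n div 4 mod p + p - m div 4 mod p) mod p < p" "(n div 4 div p + p - m div 4 div p) mod p < p"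
    using p_pos by simp_all
  have le: "m div 4 mod p \<le> n div 4 mod p + p" "m div 4 div p \<le> n div 4 div p + p"
    using div_lt[OF assms(2)] by (simp_all add: less_imp_le_nat trans_le_add2)
  show ?thesis
    unfolding sp Enc_def code_parts[OF lt] of_nat_mod2 of_nat_modp[OF le(1)] of_nat_modp[OF le(2)]
    by (simp add: algebra_simps)
qed

lemma E_zero: "E 0 = 0" by (simp add: Enc_def zero_prod_def)

lemma E_neg: assumes "n < N" shows "E (negc p n) = - E n"
  using E_sub[of 0 n] assms p_pos by (simp add: negc_def E_zero)

lemma E_snd0: assumes "n < N" shows "snd (E n) = 0 \<longleftrightarrow> n < 4"
proof
  assume "snd (E n) = 0"
  then have "snd (E n) = snd (E 0)" by (simp add: E_zero)
  moreover have "n div 4 < p * p" using assms by (simp add: div_less_iff_less_mult mult.commute mult.left_commute)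
  ultimately have "n div 4 = 0 div 4" using snd_inj[of n 0] p_pos by simp
  then show "n < 4" by simp
next
  assume "n < 4" then show "snd (E n) = 0" by (simp add: Enc_def)
qed


end

definition Dl :: "nat \<Rightarrow> nat list list \<Rightarrow> nat list" where
 "Dl p Bl = concat (map (\<lambda>bl. map (\<lambda>(x,y). subc p x y) (filter (\<lambda>(x,y). x \<noteq> y) (List.product bl bl))) Bl)"
definition Pl :: "nat \<Rightarrow> nat list list \<Rightarrow> nat list" where
 "Pl p Bl = concat (Bl @ map (map (negc p)) Bl)"

fun merge :: "nat list \<Rightarrow> nat list \<Rightarrow> nat list" where
  "merge [] ys = ys"
| "merge xs [] = xs"
| "merge (x#xs) (y#ys) = (if x \<le> y then x # merge xs (y#ys) else y # merge (x#xs) ys)"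
fun merge_pairs :: "nat list list \<Rightarrow> nat list list" where
  "merge_pairs (a#b#xs) = merge a b # merge_pairs xs"
| "merge_pairs xs = xs"
lemma length_merge_pairs: "length (merge_pairs xs) = (length xs + 1) div 2"
  by (induction xs rule: merge_pairs.induct) auto
function merge_all :: "nat list list \<Rightarrow> nat list" where
  "merge_all [] = []"
| "merge_all [x] = x"
| "merge_all (a#b#xs) = merge_all (merge_pairs (a#b#xs))"
  by pat_completeness auto
termination by (relation "measure length") (auto simp: length_merge_pairs)
definition msort :: "nat list \<Rightarrow> nat list" where "msort xs = merge_all (map (\<lambda>x. [x]) xs)"

lemma mset_merge: "mset (merge xs ys) = mset xs + mset ys"
  by (induction xs ys rule: merge.induct) auto
lemma mset_merge_pairs: "sum_list (map mset (merge_pairs xss)) = sum_list (map mset xss)"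
  by (induction xss rule: merge_pairs.induct) (auto simp: mset_merge add.assoc)
lemma mset_merge_all: "mset (merge_all xss) = sum_list (map mset xss)"
proof (induction xss rule: merge_all.induct)
  case (3 a b xs)
  then show ?case using mset_merge_pairs[of "a#b#xs"] by simp
qed auto
lemma mset_msort: "mset (msort xs) = mset xs"
  by (induction xs) (auto simp: msort_def mset_merge_all)

fun strict_inc :: "nat list \<Rightarrow> bool" where
  "strict_inc (x # y # zs) = (x < y \<and> strict_inc (y # zs))"
| "strict_inc _ = True"

lemma strict_inc_sorted: "strict_inc xs \<Longrightarrow> sorted_wrt (<) xs"
  by (induction xs rule: strict_inc.induct) (auto simp: sorted_wrt2)

definition chk :: "nat \<Rightarrow> nat list list \<Rightarrow> nat \<Rightarrow> bool" where
 "chk p Bl c \<longleftrightarrow> list_all (\<lambda>bl. length bl = 4) Bl \<and> msort (Dl p Bl) = [4..<4*p*p] \<and>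
    strict_inc (msort (Pl p Bl)) \<and> list_all (\<lambda>x. 4 \<le> x \<and> x < 4*p*p \<and> x div 4 \<noteq> c) (Pl p Bl) \<and>
    c < p*p \<and> c \<noteq> negc p (4*c) div 4"

lemma count_mset_map_filter: "count (mset (map h L)) k = length (filter (\<lambda>z. h z = k) L)"
  by (induction L) auto

lemma count_concat_map: "count (mset (concat (map f Bl))) k = (\<Sum>bl\<leftarrow>Bl. count (mset (f bl)) k)"
  by (induction Bl) auto

context enc
begin

lemma blk_count:
  assumes "distinct bl" "set bl \<subseteq> {..<N}" "k < N"
  shows "card {(x, y). x \<in> E ` set bl \<and> y \<in> E ` set bl \<and> x \<noteq> y \<and> x - y = E k}
       = count (mset (map (\<lambda>(x,y). subc p x y) (filter (\<lambda>(x,y). x \<noteq> y) (List.product bl bl)))) k"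
proof -
  define S where "S = {(x,y). x \<in> set bl \<and> y \<in> set bl \<and> x \<noteq> y \<and> subc p x y = k}"
  have eq: "{(x, y). x \<in> E ` set bl \<and> y \<in> E ` set bl \<and> x \<noteq> y \<and> x - y = E k} = map_prod E E ` S"
  proof (intro equalityI subsetI)
    fix z assume "z \<in> {(x, y). x \<in> E ` set bl \<and> y \<in> E ` set bl \<and> x \<noteq> y \<and> x - y = E k}"
    then obtain x y where z: "z = (E x, E y)" "x \<in> set bl" "y \<in> set bl" "E x \<noteq> E y" "E x - E y = E k" by blast
    have xy: "x < N" "y < N" using z(2,3) assms(2) by auto
    have "E (subc p x y) = E k" using E_sub[OF xy] z(5) by simp
    then have "subc p x y = k" using E_inj[OF subc_lt assms(3)] by blast
    moreover have "x \<noteq> y" using z(4) by auto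
    ultimately show "z \<in> map_prod E E ` S" using z(1-3) unfolding S_def by force
  next
    fix z assume "z \<in> map_prod E E ` S"
    then obtain x y where z: "z = (E x, E y)" "x \<in> set bl" "y \<in> set bl" "x \<noteq> y" "subc p x y = k"
      unfolding S_def by auto
    have xy: "x < N" "y < N" using z(2,3) assms(2) by auto
    have "E x \<noteq> E y" using E_inj[OF xy] z(4) by blast
    moreover have "E x - E y = E k" using E_sub[OF xy] z(5) by simp
    ultimately show "z \<in> {(x, y). x \<in> E ` set bl \<and> y \<in> E ` set bl \<and> x \<noteq> y \<and> x - y = E k}"
      using z(1-3) by blast
  qed
  have inj: "inj_on (map_prod E E) S"
  proof (rule inj_on_subset[OF map_prod_inj_on[OF E_inj_on E_inj_on]])
    show "S \<subseteq> {..<N} \<times> {..<N}" using assms(2) unfolding S_def by auto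
  qed
  have "card {(x, y). x \<in> E ` set bl \<and> y \<in> E ` set bl \<and> x \<noteq> y \<and> x - y = E k} = card S"
    unfolding eq using card_image[OF inj] .
  also have "card S = length (filter (\<lambda>z. (case z of (x,y) \<Rightarrow> subc p x y) = k) (filter (\<lambda>(x,y). x \<noteq> y) (List.product bl bl)))"
  proof -
    have d: "distinct (filter (\<lambda>(x,y). x \<noteq> y) (List.product bl bl))"
      using assms(1) by (simp add: distinct_product)
    have "{z. (case z of (x,y) \<Rightarrow> subc p x y) = k} \<inter> set (filter (\<lambda>(x,y). x \<noteq> y) (List.product bl bl)) = S"
      unfolding S_def by auto
    then show ?thesis using distinct_length_filter[OF d] by simp
  qed
  also have "\<dots> = count (mset (map (\<lambda>(x,y). subc p x y) (filter (\<lambda>(x,y). x \<noteq> y) (List.product bl bl)))) k"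
    by (rule count_mset_map_filter[symmetric])
  finally show ?thesis .
qed


lemma chk_sound:
  assumes ck: "chk p Bl c"
  defines "Bs \<equiv> map (\<lambda>bl. E ` set bl) Bl"
  shows "is_BRDF UNIV {g. snd g = 0} 4 1 Bs"
    and "\<exists>c'. c' \<noteq> - c' \<and> (\<forall>B\<in>set Bs. \<forall>a. (a, c') \<notin> B \<and> - (a, c') \<notin> B)"
proof -
  define Bl' where "Bl' = Bl @ map (map (negc p)) Bl"
  have len: "\<forall>bl\<in>set Bl. length bl = 4" using ck by (simp add: chk_def list_all_iff)
  have len': "\<forall>bl\<in>set Bl'. length bl = 4" using len by (auto simp: Bl'_def)
  have PlBl: "Pl p Bl = concat Bl'" by (simp add: Pl_def Bl'_def)
  have "distinct (msort (Pl p Bl))" using ck strict_inc_sorted by (simp add: chk_def strict_sorted_iff)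
  then have dP: "distinct (concat Bl')" using mset_eq_imp_distinct_iff[OF mset_msort] PlBl by simp
  have rng: "\<forall>x\<in>set (concat Bl'). 4 \<le> x \<and> x < N \<and> x div 4 \<noteq> c"
    using ck PlBl by (simp add: chk_def list_all_iff)
  have c_lt: "c < p * p" and c_ne: "c \<noteq> negc p (4*c) div 4" using ck by (simp_all add: chk_def)
  have mD: "mset (Dl p Bl) = mset [4..<N]"
    using ck mset_msort[of "Dl p Bl"] by (simp add: chk_def)
  have bl'_props: "distinct bl \<and> set bl \<subseteq> {..<N} \<and> (\<forall>x\<in>set bl. 4 \<le> x \<and> x div 4 \<noteq> c)" if "bl \<in> set Bl'" for bl
    using dP rng that by (auto simp: distinct_concat_iff)
  have bl_props: "distinct bl \<and> set bl \<subseteq> {..<N} \<and> (\<forall>x\<in>set bl. 4 \<le> x \<and> x div 4 \<noteq> c)" if "bl \<in> set Bl" for bl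
    using bl'_props that by (auto simp: Bl'_def)
  have negimg: "uminus ` E ` set bl = E ` set (map (negc p) bl)" if "set bl \<subseteq> {..<N}" for bl
  proof -
    have "uminus ` E ` set bl = (\<lambda>x. - E x) ` set bl" by (simp add: image_image)
    also have "\<dots> = (\<lambda>x. E (negc p x)) ` set bl" using E_neg that by (intro image_cong) auto
    finally show ?thesis by (simp add: image_image)
  qed
  have blocks: "\<forall>B\<in>set Bs. B \<subseteq> UNIV \<and> finite B \<and> card B = 4"
  proof
    fix B assume "B \<in> set Bs"
    then obtain bl where bl: "bl \<in> set Bl" "B = E ` set bl" unfolding Bs_def by auto
    have "inj_on E (set bl)" using inj_on_subset[OF E_inj_on] bl_props[OF bl(1)] by blast
    then have "card B = length bl" using bl bl_props[OF bl(1)] by (simp add: card_image distinct_card)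
    then show "B \<subseteq> UNIV \<and> finite B \<and> card B = 4" using len bl by auto
  qed
  have dc: "diff_count Bs (E k) = count (mset [4..<N]) k" if "k < N" for k
  proof -
    have "diff_count Bs (E k) = (\<Sum>bl\<leftarrow>Bl. card {(x, y). x \<in> E ` set bl \<and> y \<in> E ` set bl \<and> x \<noteq> y \<and> x - y = E k})"
      unfolding diff_count_def Bs_def by (simp add: comp_def)
    also have "\<dots> = (\<Sum>bl\<leftarrow>Bl. count (mset (map (\<lambda>(x,y). subc p x y) (filter (\<lambda>(x,y). x \<noteq> y) (List.product bl bl)))) k)"
      using blk_count bl_props that by (intro arg_cong[where f=sum_list] map_cong) auto
    also have "\<dots> = count (mset (Dl p Bl)) k" unfolding Dl_def count_concat_map ..
    finally show ?thesis using mD by simp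
  qed
  have r1: "\<forall>g\<in>UNIV - {g. snd g = 0}. diff_count Bs g = 1"
  proof
    fix g :: "'a \<times> 'b" assume "g \<in> UNIV - {g. snd g = 0}"
    then have g: "snd g \<noteq> 0" by simp
    obtain k where k: "k < N" "g = E k" using E_surj by (metis UNIV_I imageE lessThan_iff)
    have "4 \<le> k" using E_snd0[OF k(1)] g k(2) by auto
    then show "diff_count Bs g = 1" using dc[OF k(1)] k by simp
  qed
  have r2: "\<forall>g\<in>{g. snd g = 0}. diff_count Bs g = 0"
  proof
    fix g :: "'a \<times> 'b" assume "g \<in> {g. snd g = 0}"
    then have g: "snd g = 0" by simp
    obtain k where k: "k < N" "g = E k" using E_surj by (metis UNIV_I imageE lessThan_iff)
    have "k < 4" using E_snd0[OF k(1)] g k(2) by auto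
    then show "diff_count Bs g = 0" using dc[OF k(1)] k by simp
  qed
  have rdf: "is_RDF UNIV {g. snd g = 0} 4 1 Bs"
    unfolding is_RDF_def using blocks r1 r2 by blast
  have L: "Bs @ map (\<lambda>B. uminus ` B) Bs = map (\<lambda>bl. E ` set bl) Bl'"
    unfolding Bs_def Bl'_def using negimg bl_props by auto
  have dBl': "distinct Bl'"
  proof -
    have "[] \<notin> set Bl'" using len' by auto
    then have "removeAll [] Bl' = Bl'" by simp
    then show ?thesis using dP by (simp add: distinct_concat_iff)
  qed
  have disj: "\<forall>i<length L. \<forall>j<length L. i \<noteq> j \<longrightarrow> L ! i \<inter> L ! j = {}"
    if "L = Bs @ map (\<lambda>B. uminus ` B) Bs" for L
  proof (intro allI impI)
    fix i j assume ij: "i < length L" "j < length L" "i \<noteq> j"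
    have ij': "i < length Bl'" "j < length Bl'" using ij that L by simp_all
    have ne: "Bl' ! i \<noteq> Bl' ! j" using dBl' ij' ij(3) by (simp add: nth_eq_iff_index_eq)
    have mem: "Bl' ! i \<in> set Bl'" "Bl' ! j \<in> set Bl'" using ij' by simp_all
    have "set (Bl' ! i) \<inter> set (Bl' ! j) = {}" using dP ne mem by (auto simp: distinct_concat_iff)
    moreover have "E ` set (Bl' ! i) \<inter> E ` set (Bl' ! j) = E ` (set (Bl' ! i) \<inter> set (Bl' ! j))"
      using inj_on_image_Int[OF E_inj_on] bl'_props[OF mem(1)] bl'_props[OF mem(2)] by blast
    ultimately show "L ! i \<inter> L ! j = {}" using that L ij' by simp
  qed
  have noH: "\<forall>B\<in>set Bs. B \<inter> {g. snd g = 0} = {}"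
  proof
    fix B assume "B \<in> set Bs"
    then obtain bl where bl: "bl \<in> set Bl" "B = E ` set bl" unfolding Bs_def by auto
    show "B \<inter> {g. snd g = 0} = {}"
    proof (rule ccontr)
      assume "B \<inter> {g. snd g = 0} \<noteq> {}"
      then obtain x where x: "x \<in> set bl" "snd (E x) = 0" using bl by auto
      have "x < N" "4 \<le> x" using bl_props[OF bl(1)] x(1) by auto
      then show False using E_snd0[of x] x(2) by simp
    qed
  qed
  show "is_BRDF UNIV {g. snd g = 0} 4 1 Bs"
    unfolding is_BRDF_def Let_def using rdf noH disj[OF refl] by (intro conjI)
  define c' where "c' = snd (E (4 * c))"
  have c4: "4 * c < N" using c_lt by simp
  have nc: "negc p (4*c) < N" unfolding negc_def by (rule subc_lt)
  have avoid: "(a, c') \<notin> E ` set bl" if "bl \<in> set Bl'" for a bl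
  proof
    assume "(a, c') \<in> E ` set bl"
    then obtain x where x: "x \<in> set bl" "E x = (a, c')" by auto
    have xN: "x < N" "x div 4 \<noteq> c" using bl'_props[OF that] x(1) by auto
    have "snd (E x) = snd (E (4*c))" using x(2) c'_def by simp
    moreover have "x div 4 < p * p" using xN(1) by (simp add: div_less_iff_less_mult mult.commute mult.left_commute)
    ultimately have "x div 4 = 4 * c div 4" using snd_inj[of x "4*c"] c_lt by simp
    then show False using xN(2) by simp
  qed
  show "\<exists>c'. c' \<noteq> - c' \<and> (\<forall>B\<in>set Bs. \<forall>a. (a, c') \<notin> B \<and> - (a, c') \<notin> B)"
  proof (intro exI conjI)
    show "c' \<noteq> - c'"
    proof
      assume "c' = - c'"
      then have "snd (E (4*c)) = snd (E (negc p (4*c)))" using E_neg[OF c4] c'_def by simp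
      moreover have "negc p (4*c) div 4 < p * p" using nc by (simp add: div_less_iff_less_mult mult.commute mult.left_commute)
      ultimately have "4 * c div 4 = negc p (4*c) div 4" using snd_inj[of "4*c" "negc p (4*c)"] c_lt by simp
      then show False using c_ne by simp
    qed
  next
    show "\<forall>B\<in>set Bs. \<forall>a. (a, c') \<notin> B \<and> - (a, c') \<notin> B"
    proof (intro ballI allI)
    fix B a assume "B \<in> set Bs"
    then obtain bl where bl: "bl \<in> set Bl" "B = E ` set bl" unfolding Bs_def by auto
    have "(a, c') \<notin> E ` set bl" using avoid bl(1) by (auto simp: Bl'_def)
    moreover have "(a, c') \<notin> E ` set (map (negc p) bl)" using avoid[of "map (negc p) bl" a] bl(1) by (simp add: Bl'_def)
    then have "(a, c') \<notin> uminus ` B" using negimg bl bl_props by auto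
    then have "- (a, c') \<notin> B" by (metis image_eqI minus_minus)
    ultimately show "(a, c') \<notin> B \<and> - (a, c') \<notin> B" using bl by simp
    qed
  qed
qed

end



lemma size_filter_img:
  assumes "finite A"
  shows "size (filter_mset P (image_mset f (mset_set A))) = card {x \<in> A. P (f x)}"
  using assms by (simp add: filter_mset_image_mset)

lemma size_filter_sum_list:
  "size (filter_mset P (sum_list Ms)) = (\<Sum>M\<leftarrow>Ms. size (filter_mset P M))"
  by (induction Ms) auto

lemma sum_list_ind: "(\<Sum>X\<leftarrow>L. (if P X then 1 else 0 :: nat)) = length (filter P L)"
  by (induction L) auto

lemma filter_le1:
  assumes "\<forall>i<length L. \<forall>j<length L. i \<noteq> j \<longrightarrow> L ! i \<inter> L ! j = {}"
  shows "length (filter (\<lambda>X. d \<in> X) L) \<le> 1"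
proof -
  have "length (filter (\<lambda>X. d \<in> X) L) = card {i. i < length L \<and> d \<in> L ! i}"
    by (rule length_filter_conv_card)
  also have "\<dots> \<le> 1"
  proof -
    have "\<forall>i\<in>{i. i < length L \<and> d \<in> L ! i}. \<forall>j\<in>{i. i < length L \<and> d \<in> L ! i}. i = j"
      using assms by blast
    then show ?thesis using card_le_Suc0_iff_eq[of "{i. i < length L \<and> d \<in> L ! i}"] by simp
  qed
  finally show ?thesis .
qed

lemma translate_count:
  fixes B :: "'g::ab_group_add set" and u v :: 'g
  assumes that: "u \<noteq> v"
  shows "card {g. u \<in> (+) g ` B \<and> v \<in> (+) g ` B} = card {(x, y). x \<in> B \<and> y \<in> B \<and> x \<noteq> y \<and> x - y = u - v}"
proof -
  have mem: "w \<in> (+) g ` B \<longleftrightarrow> w - g \<in> B" for w g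
  proof
    assume "w \<in> (+) g ` B" then show "w - g \<in> B" by auto
  next
    assume "w - g \<in> B" then show "w \<in> (+) g ` B" by (intro image_eqI[of _ _ "w - g"]) auto
  qed
  have eq: "{(x, y). x \<in> B \<and> y \<in> B \<and> x \<noteq> y \<and> x - y = u - v} = (\<lambda>g. (u - g, v - g)) ` {g. u \<in> (+) g ` B \<and> v \<in> (+) g ` B}"
  proof (intro equalityI subsetI)
    fix z assume "z \<in> {(x, y). x \<in> B \<and> y \<in> B \<and> x \<noteq> y \<and> x - y = u - v}"
    then obtain x y where z: "z = (x, y)" "x \<in> B" "y \<in> B" "x - y = u - v" by blast
    have "y = v - (u - x)" using z(4) by (simp add: algebra_simps)
    then show "z \<in> (\<lambda>g. (u - g, v - g)) ` {g. u \<in> (+) g ` B \<and> v \<in> (+) g ` B}"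
      using z by (intro image_eqI[of _ _ "u - x"]) (auto simp: mem)
  next
    fix z assume "z \<in> (\<lambda>g. (u - g, v - g)) ` {g. u \<in> (+) g ` B \<and> v \<in> (+) g ` B}"
    then obtain g where "z = (u - g, v - g)" "u - g \<in> B" "v - g \<in> B" by (auto simp: mem)
    then show "z \<in> {(x, y). x \<in> B \<and> y \<in> B \<and> x \<noteq> y \<and> x - y = u - v}" using that by auto
  qed
  have "inj_on (\<lambda>g. (u - g, v - g)) {g. u \<in> (+) g ` B \<and> v \<in> (+) g ` B}"
    by (auto intro: inj_onI)
  then show ?thesis unfolding eq by (simp add: card_image)
qed


lemma image_mset_sum_list': "image_mset f (sum_list Ms) = sum_list (map (image_mset f) Ms)"
  by (induction Ms) auto

lemma mem_sum_list_mset: "x \<in># sum_list Ms \<Longrightarrow> \<exists>M\<in>set Ms. x \<in># M"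
  by (induction Ms) auto

lemma card_cond_single: "card {g. g = u \<and> P} = (if P then 1 else 0)"
  by (cases P) auto

lemma nested_from_BRDF:
  fixes Bs :: "('x::{ab_group_add,finite} \<times> 'y::{ab_group_add,finite}) set list" and c :: 'y
  assumes brdf: "is_BRDF UNIV {g. snd g = 0} 4 1 Bs"
    and cx: "card (UNIV :: 'x set) = 4"
    and cne: "c \<noteq> - c"
    and cav: "\<forall>B\<in>set Bs. \<forall>a. (a, c) \<notin> B \<and> - (a, c) \<notin> B"
  shows "\<exists>As. is_nested_BIBD (UNIV :: ('x \<times> 'y) set) (card (UNIV :: ('x \<times> 'y) set)) As"
proof -
  have rdf: "is_RDF UNIV {g. snd g = 0} 4 1 Bs" and noH: "\<forall>B\<in>set Bs. B \<inter> {g. snd g = 0} = {}"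
    and disj: "\<forall>i<length (Bs @ map (\<lambda>B. uminus ` B) Bs). \<forall>j<length (Bs @ map (\<lambda>B. uminus ` B) Bs). i \<noteq> j \<longrightarrow>
        (Bs @ map (\<lambda>B. uminus ` B) Bs) ! i \<inter> (Bs @ map (\<lambda>B. uminus ` B) Bs) ! j = {}"
    using brdf unfolding is_BRDF_def Let_def by blast+
  have Bp: "finite B \<and> card B = 4" if "B \<in> set Bs" for B using rdf that unfolding is_RDF_def by blast
  have dc1: "diff_count Bs d = 1" if "snd d \<noteq> 0" for d using rdf that unfolding is_RDF_def by blast
  have dc0: "diff_count Bs d = 0" if "snd d = 0" for d using rdf that unfolding is_RDF_def by blast
  have c0: "c \<noteq> 0" using cne by auto
  have zH: "(0::'x\<times>'y) \<in> {g. snd g = 0}" by simp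
  have zB: "(0::'x\<times>'y) \<notin> B" if "B \<in> set Bs" for B using noH that zH by blast
  have mem: "w \<in> (+) g ` B \<longleftrightarrow> w - g \<in> B" for w g :: "'x \<times> 'y" and B
  proof
    assume "w \<in> (+) g ` B" then show "w - g \<in> B" by auto
  next
    assume "w - g \<in> B" then show "w \<in> (+) g ` B" by (intro image_eqI[of _ _ "w - g"]) auto
  qed
  define U where "U = mset_set (UNIV :: ('x \<times> 'y) set)"
  define Y where "Y = mset_set (UNIV :: 'y set)"
  define N where "N = sum_list (map (\<lambda>B. image_mset (\<lambda>g. ((+) g ` B, g)) U) Bs)
                    + image_mset (\<lambda>y. (UNIV \<times> {y}, (0::'x, y + c))) Y"
  define As where "As = image_mset fst N"
  have As_eq: "As = sum_list (map (\<lambda>B. image_mset (\<lambda>g. (+) g ` B) U) Bs) + image_mset (\<lambda>y. UNIV \<times> {y}) Y"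
    unfolding As_def N_def by (simp add: image_mset_sum_list' comp_def image_mset.compositionality)
  have F_eq: "image_mset (\<lambda>(A, x). insert x A) N = sum_list (map (\<lambda>B. image_mset (\<lambda>g. insert g ((+) g ` B)) U) Bs)
      + image_mset (\<lambda>y. insert (0, y + c) (UNIV \<times> {y})) Y"
    unfolding N_def by (simp add: image_mset_sum_list' comp_def image_mset.compositionality)
  have cntA: "size (filter_mset P As) = (\<Sum>B\<leftarrow>Bs. card {g. P ((+) g ` B)}) + card {y. P (UNIV \<times> {y})}" for P
    unfolding As_eq U_def Y_def by (simp add: size_filter_sum_list size_filter_img comp_def)
  have cntF: "size (filter_mset P (image_mset (\<lambda>(A, x). insert x A) N)) =
      (\<Sum>B\<leftarrow>Bs. card {g. P (insert g ((+) g ` B))}) + card {y. P (insert (0, y + c) (UNIV \<times> {y}))}" for P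
    unfolding F_eq U_def Y_def by (simp add: size_filter_sum_list size_filter_img comp_def)
  have cardtr: "card ((+) g ` B) = card B" for g :: "'x \<times> 'y" and B
    by (rule card_image) (auto intro: inj_onI)
  have cardrow: "card ((UNIV :: 'x set) \<times> {y}) = 4" for y :: 'y
  proof -
    have "card ((UNIV :: 'x set) \<times> {y}) = card (UNIV :: 'x set) * card {y}" by (rule card_cartesian_product)
    then show ?thesis using cx by simp
  qed
  have diffsum: "(\<Sum>B\<leftarrow>Bs. card {g. u \<in> (+) g ` B \<and> v \<in> (+) g ` B}) = diff_count Bs (u - v)"
    if "u \<noteq> v" for u v :: "'x \<times> 'y"
    unfolding diff_count_def using translate_count[OF that] by simp
  have rowc: "card {y. u \<in> UNIV \<times> {y} \<and> v \<in> UNIV \<times> {y}} = (if snd u = snd v then 1 else 0)" for u v :: "'x \<times> 'y"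
  proof -
    have "{y. u \<in> UNIV \<times> {y} \<and> v \<in> UNIV \<times> {y}} = (if snd u = snd v then {snd u} else {})"
      by (cases u, cases v) auto
    then show ?thesis by simp
  qed
  have blocksA: "\<forall>A\<in>#As. A \<subseteq> UNIV \<and> card A = 4"
  proof
    fix A assume "A \<in># As"
    then have "(\<exists>B\<in>set Bs. \<exists>g. A = (+) g ` B) \<or> (\<exists>y. A = UNIV \<times> {y})"
      unfolding As_eq U_def Y_def by (auto dest!: mem_sum_list_mset)
    then show "A \<subseteq> UNIV \<and> card A = 4" using Bp cardtr cardrow by auto
  qed
  have pairsA: "\<forall>u\<in>UNIV. \<forall>v\<in>UNIV. u \<noteq> v \<longrightarrow> size (filter_mset (\<lambda>A. u \<in> A \<and> v \<in> A) As) = 1"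
  proof (intro ballI impI)
    fix u v :: "'x \<times> 'y" assume uv: "u \<noteq> v"
    have "size (filter_mset (\<lambda>A. u \<in> A \<and> v \<in> A) As) = diff_count Bs (u - v) + (if snd u = snd v then 1 else 0)"
      using cntA diffsum[OF uv] rowc by simp
    then show "size (filter_mset (\<lambda>A. u \<in> A \<and> v \<in> A) As) = 1"
      using dc0 dc1 by (cases "snd u = snd v") auto
  qed
  have bibd: "is_BIBD (UNIV :: ('x \<times> 'y) set) (card (UNIV :: ('x \<times> 'y) set)) 4 1 As"
    unfolding is_BIBD_def using blocksA pairsA by simp
  have Nprop: "\<forall>(A, x)\<in>#N. x \<in> UNIV \<and> x \<notin> A"
  proof
    fix z assume "z \<in># N"
    then have "(\<exists>B\<in>set Bs. \<exists>g. z = ((+) g ` B, g)) \<or> (\<exists>y. z = (UNIV \<times> {y}, (0::'x, y + c)))"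
      unfolding N_def U_def Y_def by (auto dest!: mem_sum_list_mset)
    then show "case z of (A, x) \<Rightarrow> x \<in> UNIV \<and> x \<notin> A"
    proof
      assume "\<exists>B\<in>set Bs. \<exists>g. z = ((+) g ` B, g)"
      then obtain B g where "B \<in> set Bs" "z = ((+) g ` B, g)" by blast
      then show ?thesis using zB mem by auto
    next
      assume "\<exists>y. z = (UNIV \<times> {y}, (0::'x, y + c))"
      then obtain y where "z = (UNIV \<times> {y}, (0::'x, y + c))" by blast
      then show ?thesis using c0 by auto
    qed
  qed
  have blocksF: "\<forall>A\<in># image_mset (\<lambda>(A, x). insert x A) N. A \<subseteq> UNIV \<and> card A = 5"
  proof
    fix A' assume "A' \<in># image_mset (\<lambda>(A, x). insert x A) N"
    then obtain A x where Ax: "(A, x) \<in># N" "A' = insert x A" by auto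
    have "A \<in># As" using Ax(1) unfolding As_def by (metis fst_conv image_eqI set_image_mset)
    then have "card A = 4" using blocksA by blast
    moreover have "x \<notin> A" using Nprop Ax(1) by fastforce
    ultimately show "A' \<subseteq> UNIV \<and> card A' = 5" using Ax(2) by simp
  qed
  have negmem: "d \<in> uminus ` B \<longleftrightarrow> - d \<in> B" for d :: "'x \<times> 'y" and B
    by (auto intro!: image_eqI[of _ _ "- d"])
  have Lsum: "(\<Sum>B\<leftarrow>Bs. (if d \<in> B then 1 else 0 :: nat)) + (\<Sum>B\<leftarrow>Bs. (if - d \<in> B then 1 else 0)) \<le> 1"
    for d :: "'x \<times> 'y"
  proof -
    have "(\<Sum>B\<leftarrow>Bs. (if d \<in> B then 1 else 0 :: nat)) + (\<Sum>B\<leftarrow>Bs. (if - d \<in> B then 1 else 0))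
        = (\<Sum>X\<leftarrow>Bs @ map (\<lambda>B. uminus ` B) Bs. (if d \<in> X then 1 else 0))"
      by (simp add: comp_def negmem)
    also have "\<dots> = length (filter (\<lambda>X. d \<in> X) (Bs @ map (\<lambda>B. uminus ` B) Bs))" by (rule sum_list_ind)
    also have "\<dots> \<le> 1" by (rule filter_le1[OF disj])
    finally show ?thesis .
  qed
  have K3: "card {g. u \<in> insert g ((+) g ` B) \<and> v \<in> insert g ((+) g ` B)}
      \<le> card {g. u \<in> (+) g ` B \<and> v \<in> (+) g ` B} + (if v - u \<in> B then 1 else 0) + (if u - v \<in> B then 1 else 0)"
    if uv: "u \<noteq> v" for u v :: "'x \<times> 'y" and B
  proof -
    have "{g. u \<in> insert g ((+) g ` B) \<and> v \<in> insert g ((+) g ` B)} \<subseteq>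
        {g. u \<in> (+) g ` B \<and> v \<in> (+) g ` B} \<union> {g. g = u \<and> v - u \<in> B} \<union> {g. g = v \<and> u - v \<in> B}"
      using uv mem by auto
    then have "card {g. u \<in> insert g ((+) g ` B) \<and> v \<in> insert g ((+) g ` B)} \<le>
        card ({g. u \<in> (+) g ` B \<and> v \<in> (+) g ` B} \<union> {g. g = u \<and> v - u \<in> B} \<union> {g. g = v \<and> u - v \<in> B})"
      by (intro card_mono) auto
    also have "\<dots> \<le> card {g. u \<in> (+) g ` B \<and> v \<in> (+) g ` B} + card {g. g = u \<and> v - u \<in> B} + card {g. g = v \<and> u - v \<in> B}"
      by (meson add_le_mono card_Un_le dual_order.trans le_refl)
    finally show ?thesis unfolding card_cond_single .
  qed
  have K4: "card {y. u \<in> insert (0, y + c) (UNIV \<times> {y}) \<and> v \<in> insert (0, y + c) (UNIV \<times> {y})}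
      \<le> (if snd u = snd v then 1 else 0) + (if fst u = 0 \<and> snd u - snd v = c then 1 else 0)
         + (if fst v = 0 \<and> snd v - snd u = c then 1 else 0)"
    if uv: "u \<noteq> v" for u v :: "'x \<times> 'y"
  proof -
    have "{y. u \<in> insert (0, y + c) (UNIV \<times> {y}) \<and> v \<in> insert (0, y + c) (UNIV \<times> {y})} \<subseteq>
        {y. y = snd u \<and> snd u = snd v} \<union> {y. y = snd v \<and> (fst u = 0 \<and> snd u - snd v = c)}
          \<union> {y. y = snd u \<and> (fst v = 0 \<and> snd v - snd u = c)}"
      using uv by (cases u, cases v) auto
    then have "card {y. u \<in> insert (0, y + c) (UNIV \<times> {y}) \<and> v \<in> insert (0, y + c) (UNIV \<times> {y})} \<le>
        card ({y. y = snd u \<and> snd u = snd v} \<union> {y. y = snd v \<and> (fst u = 0 \<and> snd u - snd v = c)}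
          \<union> {y. y = snd u \<and> (fst v = 0 \<and> snd v - snd u = c)})"
      by (intro card_mono) auto
    also have "\<dots> \<le> card {y. y = snd u \<and> snd u = snd v} + card {y. y = snd v \<and> (fst u = 0 \<and> snd u - snd v = c)}
          + card {y. y = snd u \<and> (fst v = 0 \<and> snd v - snd u = c)}"
      by (meson add_le_mono card_Un_le dual_order.trans le_refl)
    finally show ?thesis unfolding card_cond_single .
  qed
  have pairsF: "\<forall>u\<in>UNIV. \<forall>v\<in>UNIV. u \<noteq> v \<longrightarrow>
      size (filter_mset (\<lambda>A. u \<in> A \<and> v \<in> A) (image_mset (\<lambda>(A, x). insert x A) N)) \<le> 2"
  proof (intro ballI impI)
    fix u v :: "'x \<times> 'y" assume uv: "u \<noteq> v"
    define d where "d = u - v"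
    define s1 where "s1 = (\<Sum>B\<leftarrow>Bs. (if d \<in> B then 1 else 0 :: nat))"
    define s2 where "s2 = (\<Sum>B\<leftarrow>Bs. (if - d \<in> B then 1 else 0 :: nat))"
    have vu: "v - u = - d" unfolding d_def by simp
    have "(\<Sum>B\<leftarrow>Bs. card {g. u \<in> insert g ((+) g ` B) \<and> v \<in> insert g ((+) g ` B)})
       \<le> (\<Sum>B\<leftarrow>Bs. card {g. u \<in> (+) g ` B \<and> v \<in> (+) g ` B} + (if v - u \<in> B then 1 else 0) + (if u - v \<in> B then 1 else 0))"
      by (rule sum_list_mono) (rule K3[OF uv])
    also have "\<dots> = diff_count Bs d + s2 + s1"
      unfolding sum_list_addf diffsum[OF uv] s1_def s2_def d_def vu[unfolded d_def] ..
    finally have S: "(\<Sum>B\<leftarrow>Bs. card {g. u \<in> insert g ((+) g ` B) \<and> v \<in> insert g ((+) g ` B)}) \<le> diff_count Bs d + s2 + s1" .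
    have s12: "s1 + s2 \<le> 1" unfolding s1_def s2_def by (rule Lsum)
    define r0 where "r0 = (if snd u = snd v then 1 else 0 :: nat)"
    define r1 where "r1 = (if fst u = 0 \<and> snd u - snd v = c then 1 else 0 :: nat)"
    define r2 where "r2 = (if fst v = 0 \<and> snd v - snd u = c then 1 else 0 :: nat)"
    have R: "card {y. u \<in> insert (0, y + c) (UNIV \<times> {y}) \<and> v \<in> insert (0, y + c) (UNIV \<times> {y})} \<le> r0 + r1 + r2"
      using K4[OF uv] unfolding r0_def r1_def r2_def .
    have tot: "size (filter_mset (\<lambda>A. u \<in> A \<and> v \<in> A) (image_mset (\<lambda>(A, x). insert x A) N)) \<le> diff_count Bs d + s2 + s1 + (r0 + r1 + r2)"
      using cntF S R by (simp add: add_mono)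
    have sd: "snd d = snd u - snd v" unfolding d_def by simp
    show "size (filter_mset (\<lambda>A. u \<in> A \<and> v \<in> A) (image_mset (\<lambda>(A, x). insert x A) N)) \<le> 2"
    proof (cases "snd u = snd v")
      case True
      then have "diff_count Bs d = 0" "r0 = 1" "r1 = 0" "r2 = 0" using dc0 sd c0 unfolding r0_def r1_def r2_def by auto
      then show ?thesis using tot s12 by linarith
    next
      case False
      then have dc: "diff_count Bs d = 1" "r0 = 0" using dc1 sd unfolding r0_def by auto
      show ?thesis
      proof (cases "snd u - snd v = c \<or> snd v - snd u = c")
        case True
        have r12: "r1 + r2 \<le> 1"
        proof -
          have "\<not> (snd u - snd v = c \<and> snd v - snd u = c)"
          proof
            assume h: "snd u - snd v = c \<and> snd v - snd u = c"
            then have "- c = c" by (metis minus_diff_eq)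
            then show False using cne by simp
          qed
          then show ?thesis unfolding r1_def r2_def by auto
        qed
        have nod: "d \<notin> B \<and> - d \<notin> B" if "B \<in> set Bs" for B
        proof -
          from True show ?thesis
          proof
            assume "snd u - snd v = c"
            then have "d = (fst d, c)" using sd by (metis prod.collapse)
            then show ?thesis using cav that by metis
          next
            assume h: "snd v - snd u = c"
            have "snd (- d) = c" unfolding d_def using h by simp
            then have "- d = (fst (- d), c)" by (metis prod.collapse)
            then show ?thesis using cav that by (metis minus_minus)
          qed
        qed
        have "s1 = 0" unfolding s1_def sum_list_ind using nod by (simp add: filter_empty_conv)
        moreover have "s2 = 0" unfolding s2_def sum_list_ind using nod by (simp add: filter_empty_conv)
        ultimately show ?thesis using tot dc r12 by linarith
      next
        case False
        then have "r1 = 0" "r2 = 0" unfolding r1_def r2_def by auto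
        then show ?thesis using tot dc s12 by linarith
      qed
    qed
  qed
  have partial: "is_partial_BIBD (UNIV :: ('x \<times> 'y) set) (card (UNIV :: ('x \<times> 'y) set)) 5 2 (image_mset (\<lambda>(A, x). insert x A) N)"
    unfolding is_partial_BIBD_def using blocksF pairsF by simp
  show ?thesis
    unfolding is_nested_BIBD_def using bibd Nprop partial As_def by blast
qed


lemma pair_count_transfer:
  assumes "inj h"
  shows "size (filter_mset (\<lambda>A'. h x \<in> A' \<and> h y \<in> A') (image_mset (image h) M)) = size (filter_mset (\<lambda>A. x \<in> A \<and> y \<in> A) M)"
  using assms by (simp add: filter_mset_image_mset inj_image_mem_iff)

lemma BIBD_transfer:
  fixes M :: "'p set multiset"
  assumes b: "is_BIBD (UNIV :: 'p set) v k lam M" and h: "bij_betw h (UNIV :: 'p set) X"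
  shows "is_BIBD X v k lam (image_mset (image h) M)"
proof -
  have inj: "inj h" and X: "X = range h" using h by (auto simp: bij_betw_def)
  have fin: "finite (UNIV :: 'p set)" "card (UNIV :: 'p set) = v" using b by (auto simp: is_BIBD_def)
  show ?thesis unfolding is_BIBD_def
  proof (intro conjI ballI impI)
    show "finite X" using X fin by simp
    show "card X = v" using X fin card_image[OF inj] by simp
  next
    fix A' assume "A' \<in># image_mset (image h) M"
    then obtain A where A: "A \<in># M" "A' = h ` A" by auto
    have "card A = k" using b A(1) by (auto simp: is_BIBD_def)
    then show "A' \<subseteq> X" "card A' = k" using A X card_image[OF inj_on_subset[OF inj]] by auto
  next
    fix x' y' assume "x' \<in> X" "y' \<in> X" "x' \<noteq> y'"
    then obtain x y where xy: "x' = h x" "y' = h y" "x \<noteq> y" using X by auto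
    show "size (filter_mset (\<lambda>A. x' \<in> A \<and> y' \<in> A) (image_mset (image h) M)) = lam"
      using b xy pair_count_transfer[OF inj] by (auto simp: is_BIBD_def)
  qed
qed

lemma partial_transfer:
  fixes M :: "'p set multiset"
  assumes b: "is_partial_BIBD (UNIV :: 'p set) v k lam M" and h: "bij_betw h (UNIV :: 'p set) X"
  shows "is_partial_BIBD X v k lam (image_mset (image h) M)"
proof -
  have inj: "inj h" and X: "X = range h" using h by (auto simp: bij_betw_def)
  have fin: "finite (UNIV :: 'p set)" "card (UNIV :: 'p set) = v" using b by (auto simp: is_partial_BIBD_def)
  show ?thesis unfolding is_partial_BIBD_def
  proof (intro conjI ballI impI)
    show "finite X" using X fin by simp
    show "card X = v" using X fin card_image[OF inj] by simp
  next
    fix A' assume "A' \<in># image_mset (image h) M"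
    then obtain A where A: "A \<in># M" "A' = h ` A" by auto
    have "card A = k" using b A(1) by (auto simp: is_partial_BIBD_def)
    then show "A' \<subseteq> X" "card A' = k" using A X card_image[OF inj_on_subset[OF inj]] by auto
  next
    fix x' y' assume "x' \<in> X" "y' \<in> X" "x' \<noteq> y'"
    then obtain x y where xy: "x' = h x" "y' = h y" "x \<noteq> y" using X by auto
    show "size (filter_mset (\<lambda>A. x' \<in> A \<and> y' \<in> A) (image_mset (image h) M)) \<le> lam"
      using b xy pair_count_transfer[OF inj] by (auto simp: is_partial_BIBD_def)
  qed
qed

lemma nested_transfer:
  fixes As :: "'p set multiset"
  assumes nb: "is_nested_BIBD (UNIV :: 'p set) v As" and h: "bij_betw h (UNIV :: 'p set) X"
  shows "\<exists>As'. is_nested_BIBD X v As'"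
proof -
  have inj: "inj h" and X: "X = range h" using h by (auto simp: bij_betw_def)
  obtain N :: "('p set \<times> 'p) multiset" where N: "image_mset fst N = As" "\<forall>(A, x)\<in>#N. x \<in> UNIV \<and> x \<notin> A"
    "is_partial_BIBD UNIV v 5 2 (image_mset (\<lambda>(A, x). insert x A) N)"
    using nb unfolding is_nested_BIBD_def by blast
  define N' where "N' = image_mset (\<lambda>(A, x). (h ` A, h x)) N"
  have f1: "image_mset fst N' = image_mset (image h) As"
    unfolding N'_def N(1)[symmetric] by (simp add: image_mset.compositionality comp_def case_prod_unfold)
  have f2: "\<forall>(A, x)\<in>#N'. x \<in> X \<and> x \<notin> A"
  proof
    fix z assume "z \<in># N'"
    then obtain A x where Ax: "(A, x) \<in># N" "z = (h ` A, h x)" unfolding N'_def by auto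
    have "x \<notin> A" using N(2) Ax(1) by fastforce
    then have "h x \<notin> h ` A" using inj by (simp add: inj_image_mem_iff)
    then show "case z of (A, x) \<Rightarrow> x \<in> X \<and> x \<notin> A" using Ax(2) X by simp
  qed
  have f3: "image_mset (\<lambda>(A, x). insert x A) N' = image_mset (image h) (image_mset (\<lambda>(A, x). insert x A) N)"
    unfolding N'_def by (simp add: image_mset.compositionality comp_def case_prod_unfold)
  have "is_nested_BIBD X v (image_mset (image h) As)"
    unfolding is_nested_BIBD_def
  proof (intro conjI exI)
    show "is_BIBD X v 4 1 (image_mset (image h) As)"
      using BIBD_transfer[OF _ h] nb unfolding is_nested_BIBD_def by blast
    show "image_mset fst N' = image_mset (image h) As" by (rule f1)
    show "\<forall>(A, x)\<in>#N'. x \<in> X \<and> x \<notin> A" by (rule f2)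
    show "is_partial_BIBD X v 5 2 (image_mset (\<lambda>(A, x). insert x A) N')"
      unfolding f3 by (rule partial_transfer[OF N(3) h])
  qed
  then show ?thesis by blast
qed



lemma chk5: "chk 5 [[15, 88, 37, 20], [19, 44, 69, 60], [8, 26, 18, 70], [4, 74, 10, 86], [78, 41, 99, 62], [90, 21, 51, 82], [43, 72, 52, 17], [23, 96, 36, 9]] 16"
  by (simp add: chk_def Dl_def Pl_def subc_def negc_def msort_def upt_rec)

lemma chk7: "chk 7 [[162, 41, 48, 138], [78, 45, 84, 142], [42, 65, 36, 118], [46, 149, 24, 14], [104, 44, 195, 74], [192, 64, 55, 22], [52, 148, 135, 158], [132, 184, 123, 30], [122, 163, 23, 143], [34, 79, 159, 119], [174, 43, 31, 15], [94, 47, 155, 91], [29, 38, 33, 179], [153, 26, 173, 115], [9, 178, 93, 191], [69, 114, 105, 7]] 20"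
  by (simp add: chk_def Dl_def Pl_def subc_def negc_def msort_def upt_rec)

lemma chk11: "chk 11 [[429, 85, 312, 110], [317, 305, 236, 170], [457, 285, 420, 78], [401, 153, 360, 350], [229, 165, 452, 282], [465, 341, 180, 418], [357, 325, 248, 142], [233, 413, 112, 474], [201, 405, 388, 314], [381, 449, 56, 238], [181, 324, 176, 407], [249, 412, 28, 451], [113, 404, 88, 447], [389, 448, 36, 227], [57, 444, 44, 247], [217, 224, 40, 379], [293, 244, 264, 367], [109, 376, 20, 191], [169, 364, 132, 207], [77, 188, 32, 119], [62, 7, 134, 69], [438, 223, 34, 393], [274, 27, 310, 277], [462, 355, 18, 197], [138, 15, 398, 161], [254, 179, 10, 121], [334, 31, 442, 345], [370, 91, 6, 61], [410, 39, 222, 437], [186, 47, 26, 273], [115, 89, 463, 67], [391, 37, 139, 175], [59, 45, 255, 299], [219, 41, 335, 331], [295, 265, 371, 151], [111, 21, 411, 431], [171, 133, 187, 319], [79, 33, 471, 459], [351, 309, 95, 403], [283, 17, 259, 231]] 120"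
  by (simp add: chk_def Dl_def Pl_def subc_def negc_def msort_def upt_rec)

lemma main_gen:
  assumes ca: "card (UNIV :: 'a::{field,finite} set) = 4"
    and cb: "card (UNIV :: 'b::{field,finite} set) = p * p" and pp: "prime p" and ck: "chk p Bl c"
  shows "(\<exists>Bs :: ('a \<times> 'b) set list. is_BRDF UNIV {p. snd p = 0} 4 1 Bs) \<and>
         (\<exists>As :: nat set multiset.
            is_nested_BIBD {0..<4 * card (UNIV :: 'b set)} (4 * card (UNIV :: 'b set)) As)"
proof -
  have ch2: "CHAR('a) = 2" using CHAR_field_eq[of 2] ca by simp
  have chp: "CHAR('b) = p" using CHAR_field_eq[OF cb pp] .
  have p2: "p \<ge> 2" using pp prime_ge_2_nat by blast
  have "p < p * p" using p2 by simp
  obtain w :: 'a where w: "w \<notin> range (of_int :: int \<Rightarrow> 'a)" using exists_nonint[OF ch2] ca by auto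
  obtain t :: 'b where t: "t \<notin> range (of_int :: int \<Rightarrow> 'b)"
    using exists_nonint[OF chp] cb \<open>p < p * p\<close> p2 by auto
  interpret enc w t p using ch2 chp pp w t ca cb by unfold_locales
  define Bs where "Bs = map (\<lambda>bl. E ` set bl) Bl"
  have brdf: "is_BRDF UNIV {g. snd g = 0} 4 1 Bs" using chk_sound(1)[OF ck] unfolding Bs_def .
  obtain c' where c': "c' \<noteq> - c'" "\<forall>B\<in>set Bs. \<forall>a. (a, c') \<notin> B \<and> - (a, c') \<notin> B"
    using chk_sound(2)[OF ck] unfolding Bs_def by blast
  obtain As where As: "is_nested_BIBD (UNIV :: ('a \<times> 'b) set) (card (UNIV :: ('a \<times> 'b) set)) As"
    using nested_from_BRDF[OF brdf ca c'(1) c'(2)] by blast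
  have cardG: "card (UNIV :: ('a \<times> 'b) set) = 4 * card (UNIV :: 'b set)"
  proof -
    have "card (UNIV :: ('a \<times> 'b) set) = card ((UNIV :: 'a set) \<times> (UNIV :: 'b set))" by simp
    also have "\<dots> = card (UNIV :: 'a set) * card (UNIV :: 'b set)" by (rule card_cartesian_product)
    finally show ?thesis using ca by simp
  qed
  obtain h where h: "bij_betw h (UNIV :: ('a \<times> 'b) set) {0..<card (UNIV :: ('a \<times> 'b) set)}"
    using ex_bij_betw_finite_nat[of "UNIV :: ('a \<times> 'b) set"] by auto
  have "\<exists>As'. is_nested_BIBD {0..<4 * card (UNIV :: 'b set)} (4 * card (UNIV :: 'b set)) As'"
    using nested_transfer[OF As h] unfolding cardG .
  moreover have "\<exists>Bs :: ('a \<times> 'b) set list. is_BRDF UNIV {p. snd p = 0} 4 1 Bs" using brdf by blast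
  ultimately show ?thesis by blast
qed

theorem mainTheorem18:
  assumes "card (UNIV :: 'a::{field,finite} set) = 4"
    and "card (UNIV :: 'b::{field,finite} set) \<in> {25, 49, 121}"
  shows "(\<exists>Bs :: ('a \<times> 'b) set list. is_BRDF UNIV {p. snd p = 0} 4 1 Bs) \<and>
         (\<exists>As :: nat set multiset.
            is_nested_BIBD {0..<4 * card (UNIV :: 'b set)} (4 * card (UNIV :: 'b set)) As)"
proof -
  have "card (UNIV :: 'b set) = 5 * 5 \<or> card (UNIV :: 'b set) = 7 * 7 \<or> card (UNIV :: 'b set) = 11 * 11"
    using assms(2) by auto
  moreover have "prime (5::nat)" "prime (7::nat)" "prime (11::nat)" by simp_all
  ultimately show ?thesis using main_gen[OF assms(1) _ _ chk5] main_gen[OF assms(1) _ _ chk7] main_gen[OF assms(1) _ _ chk11]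
    by blast
qed

end
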